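(* Let $n\in\mathbb{N}$. If $\mathbf{s}=(s_0,\ldots,s_n)\subset[0,\infty)$ is strictly positive on $(0,\infty)$, then $T_\infty(\mathbf{s})=\infty$.
   Context: For $a<b$, $\mathbf{s}$ is strictly positive on $[a,b]$ if the functional $\sigma(x^k)=s_k$ on real polynomials of degree $\le n$ satisfies $\sigma(P)\ge0$ for all $P\ge0$ on $[a,b]$ and $\sigma(P)>0$ for all such $P\not\equiv0$; strictly positive on $(0,\infty)$ means strictly positive on some $[a,b]\subset(0,\infty)$. $\mathcal{M}_{a,b}(\mathbf{s})$ is the set of positive Borel measures on $[a,b]$ with $k$-th moments $s_k$; $T_{a,b}(\mathbf{s})=\sup\{\int_{[a,b]}\frac1t\,d\mu:\mu\in\mathcal{M}_{a,b}(\mathbf{s})\}$ (with $\sup\varnothing=-\infty$) and $T_\infty(\mathbf{s})=\sup_{0<a<b}T_{a,b}(\mathbf{s})$. *)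

theory Defs
  imports "HOL-Analysis.Analysis" "HOL-Computational_Algebra.Polynomial"
begin

definition moment_functional :: "nat \<Rightarrow> (nat \<Rightarrow> real) \<Rightarrow> real poly \<Rightarrow> real" where
  "moment_functional n s P = (\<Sum>k\<le>n. coeff P k * s k)"

definition strictly_positive_on :: "nat \<Rightarrow> (nat \<Rightarrow> real) \<Rightarrow> real \<Rightarrow> real \<Rightarrow> bool" where
  "strictly_positive_on n s a b \<longleftrightarrow> a < b \<and>
     (\<forall>P. degree P \<le> n \<and> (\<forall>x\<in>{a..b}. poly P x \<ge> 0) \<longrightarrow> moment_functional n s P \<ge> 0) \<and>
     (\<forall>P. degree P \<le> n \<and> (\<forall>x\<in>{a..b}. poly P x \<ge> 0) \<and> P \<noteq> 0 \<longrightarrow> moment_functional n s P > 0)"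

definition strictly_positive_pos :: "nat \<Rightarrow> (nat \<Rightarrow> real) \<Rightarrow> bool" where
  "strictly_positive_pos n s \<longleftrightarrow> (\<exists>a b. 0 < a \<and> a < b \<and> strictly_positive_on n s a b)"

definition moment_measures :: "nat \<Rightarrow> (nat \<Rightarrow> real) \<Rightarrow> real \<Rightarrow> real \<Rightarrow> real measure set" where
  "moment_measures n s a b = {\<mu>. sets \<mu> = sets (restrict_space borel {a..b}) \<and>
      (\<forall>k\<le>n. integrable \<mu> (\<lambda>t. t ^ k) \<and> (\<integral>t. t ^ k \<partial>\<mu>) = s k)}"

text \<open>T_{a,b}(s) = sup of integral of 1/t over M_{a,b}(s); Sup {} = -infinity in ereal.\<close>
definition T_ab :: "nat \<Rightarrow> (nat \<Rightarrow> real) \<Rightarrow> real \<Rightarrow> real \<Rightarrow> ereal" where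
  "T_ab n s a b = (SUP \<mu>\<in>moment_measures n s a b. ereal (\<integral>t. 1 / t \<partial>\<mu>))"

definition T_inf :: "nat \<Rightarrow> (nat \<Rightarrow> real) \<Rightarrow> ereal" where
  "T_inf n s = (SUP ab\<in>{(a, b). 0 < a \<and> a < b}. T_ab n s (fst ab) (snd ab))"

end

theory Submission
  imports Defs
begin

lemma discrete_measure:
  fixes F :: "real set" and \<omega> :: "real \<Rightarrow> real" and c d :: real
  assumes F: "finite F" "F \<subseteq> {c..d}" and w: "\<And>t. t \<in> F \<Longrightarrow> \<omega> t \<ge> 0"
  shows "\<exists>\<mu>. sets \<mu> = sets (restrict_space borel {c..d}) \<and>
    (\<forall>f::real\<Rightarrow>real. f \<in> borel_measurable borel \<longrightarrow>
       integrable \<mu> f \<and> integral\<^sup>L \<mu> f = (\<Sum>t\<in>F. \<omega> t * f t))"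
proof -
  define N where "N = density (count_space F) (\<lambda>t. ennreal (\<omega> t))"
  define \<mu> where "\<mu> = distr N (restrict_space borel {c..d}) (\<lambda>t. t)"
  have meas: "(\<lambda>t. t) \<in> measurable N (restrict_space borel {c..d})"
    using F by (auto simp: N_def)
  show ?thesis
  proof (intro exI conjI allI impI)
    show "sets \<mu> = sets (restrict_space borel {c..d})" by (simp add: \<mu>_def)
    fix f :: "real \<Rightarrow> real" assume f: "f \<in> borel_measurable borel"
    have fr: "f \<in> borel_measurable (restrict_space borel {c..d})"
      using f by (simp add: measurable_restrict_space1)
    have ae: "AE x in count_space F. 0 \<le> \<omega> x"
      using w by (simp add: AE_count_space)
    have "integrable N f"
      unfolding N_def
      by (subst integrable_density) (use F ae in \<open>auto intro: integrable_count_space\<close>)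
    then show "integrable \<mu> f"
      unfolding \<mu>_def by (subst integrable_distr_eq[OF meas fr])
    have "integral\<^sup>L \<mu> f = integral\<^sup>L N f"
      unfolding \<mu>_def by (rule integral_distr[OF meas fr])
    also have "\<dots> = (\<integral>x. \<omega> x * f x \<partial>count_space F)"
      unfolding N_def by (subst integral_density) (use ae in auto)
    also have "\<dots> = (\<Sum>t\<in>F. \<omega> t * f t)"
      using F by (simp add: lebesgue_integral_count_space_finite)
    finally show "integral\<^sup>L \<mu> f = (\<Sum>t\<in>F. \<omega> t * f t)" .
  qed
qed


lemma cm_attains_min:
  assumes "compactin X S" "S \<noteq> {}" "continuous_map X euclideanreal f"
  shows "\<exists>x\<in>S. \<forall>y\<in>S. f x \<le> f y"
proof -
  have "compact (f ` S)" using image_compactin[OF assms(1,3)] by simp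
  then obtain m where "m \<in> f ` S" "\<forall>t\<in>f ` S. m \<le> t"
    using compact_attains_inf assms(2) by (metis image_is_empty)
  then show ?thesis by blast
qed

lemma compactin_box:
  "compactin (product_topology (\<lambda>_. euclideanreal) I) (PiE I (\<lambda>_. {l..u::real}))"
  by (simp add: compactin_PiE)

definition ev :: "nat \<Rightarrow> (nat \<Rightarrow> real) \<Rightarrow> real \<Rightarrow> real" where
  "ev n q x = (\<Sum>k\<le>n. q k * x ^ k)"
definition LL :: "nat \<Rightarrow> (nat \<Rightarrow> real) \<Rightarrow> (nat \<Rightarrow> real) \<Rightarrow> real" where
  "LL n z q = (\<Sum>k\<le>n. q k * z k)"
definition N1 :: "nat \<Rightarrow> (nat \<Rightarrow> real) \<Rightarrow> real" where
  "N1 n q = (\<Sum>k\<le>n. \<bar>q k\<bar>)"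
definition vpoly :: "nat \<Rightarrow> (nat \<Rightarrow> real) \<Rightarrow> real poly" where
  "vpoly n q = (\<Sum>k\<le>n. monom (q k) k)"

lemma coeff_vpoly: "coeff (vpoly n q) k = (if k \<le> n then q k else 0)"
  by (auto simp: vpoly_def coeff_sum)

lemma degree_vpoly: "degree (vpoly n q) \<le> n"
  unfolding vpoly_def
  by (rule degree_sum_le) (auto intro: order.trans[OF degree_monom_le])

lemma poly_vpoly: "poly (vpoly n q) x = ev n q x"
  by (simp add: vpoly_def ev_def poly_sum poly_monom)

lemma mf_vpoly: "moment_functional n s (vpoly n q) = LL n s q"
  by (simp add: moment_functional_def LL_def coeff_vpoly)

lemma vpoly_nz: "N1 n q \<noteq> 0 \<Longrightarrow> vpoly n q \<noteq> 0"
proof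
  assume "N1 n q \<noteq> 0" "vpoly n q = 0"
  then have "\<forall>k\<le>n. q k = 0" by (metis coeff_vpoly coeff_0)
  then have "N1 n q = 0" by (simp add: N1_def)
  then show False using \<open>N1 n q \<noteq> 0\<close> by simp
qed

lemma N1_nonneg: "N1 n q \<ge> 0"
  by (simp add: N1_def sum_nonneg)

lemma spo_nonneg:
  assumes "strictly_positive_on n s a b" "\<forall>x\<in>{a..b}. ev n q x \<ge> 0"
  shows "LL n s q \<ge> 0"
  using assms degree_vpoly unfolding strictly_positive_on_def
  by (metis mf_vpoly poly_vpoly)

lemma spo_pos:
  assumes "strictly_positive_on n s a b" "\<forall>x\<in>{a..b}. ev n q x \<ge> 0" "N1 n q \<noteq> 0"
  shows "LL n s q > 0"
  using assms degree_vpoly vpoly_nz unfolding strictly_positive_on_def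
  by (metis mf_vpoly poly_vpoly)

lemma cont_ev: "continuous_map (product_topology (\<lambda>_. euclideanreal) {..n}) euclideanreal (\<lambda>q. ev n q x)"
  unfolding ev_def by (intro continuous_intros continuous_map_product_projection) auto

lemma cont_LL: "continuous_map (product_topology (\<lambda>_. euclideanreal) {..n}) euclideanreal (\<lambda>q. LL n z q)"
  unfolding LL_def by (intro continuous_intros continuous_map_product_projection) auto

lemma cont_N1: "continuous_map (product_topology (\<lambda>_. euclideanreal) {..n}) euclideanreal (\<lambda>q. N1 n q)"
  unfolding N1_def by (intro continuous_intros continuous_map_product_projection) auto

lemma margin:
  assumes spo: "strictly_positive_on n s a b"
  shows "\<exists>\<delta>>0. \<forall>q. (\<forall>x\<in>{a..b}. ev n q x \<ge> 0) \<longrightarrow> LL n s q \<ge> \<delta> * N1 n q"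
proof -
  have ab: "a < b" using spo by (simp add: strictly_positive_on_def)
  define X where "X = product_topology (\<lambda>_::nat. euclideanreal) {..n}"
  define K where "K = PiE {..n} (\<lambda>_::nat. {-1..1::real})"
  define S where "S = K \<inter> {q \<in> topspace X. N1 n q \<in> {1}} \<inter>
     (\<Inter>x\<in>{a..b}. {q \<in> topspace X. ev n q x \<in> {0..}})"
  have cS: "compactin X S"
  proof (rule closed_compactin)
    show "compactin X K" unfolding X_def K_def by (rule compactin_box)
    show "S \<subseteq> K" unfolding S_def by auto
    have "closedin X K" using \<open>compactin X K\<close>
      unfolding X_def by (intro compactin_imp_closedin) (auto simp: Hausdorff_space_product_topology)
    moreover have "closedin X {q \<in> topspace X. N1 n q \<in> {1}}"
      unfolding X_def by (rule closedin_continuous_map_preimage[OF cont_N1]) auto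
    moreover have "closedin X (\<Inter>x\<in>{a..b}. {q \<in> topspace X. ev n q x \<in> {0..}})"
      using ab closedin_continuous_map_preimage[OF cont_ev, where C="{0..}"] unfolding X_def by (intro closedin_Inter) auto
    ultimately show "closedin X S" unfolding S_def by (intro closedin_Int)
  qed
  have "\<exists>\<delta>>0. \<forall>q\<in>S. LL n s q \<ge> \<delta>"
  proof (cases "S = {}")
    case True then show ?thesis by (auto intro: exI[of _ 1])
  next
    case False
    then obtain q0 where q0: "q0 \<in> S" "\<forall>q\<in>S. LL n s q0 \<le> LL n s q"
      using cm_attains_min[OF cS False, of "LL n s"] cont_LL X_def by blast
    have "LL n s q0 > 0"
      using q0(1) ab by (intro spo_pos[OF spo]) (auto simp: S_def)
    then show ?thesis using q0 by blast
  qed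
  then obtain \<delta> where \<delta>: "\<delta> > 0" "\<forall>q\<in>S. LL n s q \<ge> \<delta>" by blast
  show ?thesis
  proof (intro exI[of _ \<delta>] conjI allI impI)
    show "\<delta> > 0" by fact
    fix q assume q: "\<forall>x\<in>{a..b}. ev n q x \<ge> 0"
    show "LL n s q \<ge> \<delta> * N1 n q"
    proof (cases "N1 n q = 0")
      case True
      then show ?thesis using spo_nonneg[OF spo q] by simp
    next
      case False
      then have Np: "N1 n q > 0" using N1_nonneg[of n q] by simp
      define q' where "q' = restrict (\<lambda>k. q k / N1 n q) {..n}"
      have N1': "N1 n q' = 1"
        using Np by (simp add: N1_def q'_def sum_divide_distrib[symmetric])
      have ev': "ev n q' x = ev n q x / N1 n q" for x
        by (simp add: ev_def q'_def sum_divide_distrib)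
      have LL': "LL n s q' = LL n s q / N1 n q"
        by (simp add: LL_def q'_def sum_divide_distrib)
      have bnd: "\<bar>q' k\<bar> \<le> 1" if "k \<le> n" for k
      proof -
        have "\<bar>q' k\<bar> \<le> N1 n q'"
          unfolding N1_def using that by (intro member_le_sum) auto
        then show ?thesis using N1' by simp
      qed
      have ev'': "ev n q' x \<ge> 0" if "x \<in> {a..b}" for x
        using q that Np by (simp add: ev')
      have ext: "q' \<in> extensional {..n}" by (simp add: q'_def)
      have "q' \<in> S"
        unfolding S_def K_def X_def using bnd N1' ev'' ext
        by (auto simp: PiE_def abs_le_iff)
      then have "\<delta> \<le> LL n s q / N1 n q" using \<delta> LL' by auto
      then show ?thesis using Np by (simp add: field_simps)
    qed
  qed
qed


lemma pow_diff_bound: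
  fixes x y B :: real
  assumes "0 \<le> x" "x \<le> B" "0 \<le> y" "y \<le> B" "1 \<le> B"
  shows "\<bar>x ^ k - y ^ k\<bar> \<le> real k * B ^ k * \<bar>x - y\<bar>"
proof (induction k)
  case 0 then show ?case by simp
next
  case (Suc k)
  have eq: "x ^ Suc k - y ^ Suc k = x * (x ^ k - y ^ k) + y ^ k * (x - y)"
    by (simp add: algebra_simps)
  have "\<bar>x * (x ^ k - y ^ k)\<bar> \<le> B * (real k * B ^ k * \<bar>x - y\<bar>)"
    using Suc assms by (simp add: abs_mult mult_mono)
  moreover have "\<bar>y ^ k * (x - y)\<bar> \<le> B ^ k * \<bar>x - y\<bar>"
    using assms by (simp add: abs_mult mult_right_mono power_mono)
  moreover have "B ^ k \<le> B ^ Suc k" using assms by simp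
  ultimately have "\<bar>x ^ Suc k - y ^ Suc k\<bar> \<le> B * (real k * B ^ k * \<bar>x - y\<bar>) + B ^ Suc k * \<bar>x - y\<bar>"
    unfolding eq by (smt (verit) abs_triangle_ineq mult_right_mono abs_ge_zero)
  also have "\<dots> = real (Suc k) * B ^ Suc k * \<bar>x - y\<bar>" by (simp add: algebra_simps)
  finally show ?case .
qed

lemma ev_lip:
  fixes x y B :: real
  assumes "0 \<le> x" "x \<le> B" "0 \<le> y" "y \<le> B" "1 \<le> B"
  shows "\<bar>ev n q x - ev n q y\<bar> \<le> real n * B ^ n * N1 n q * \<bar>x - y\<bar>"
proof -
  have "\<bar>ev n q x - ev n q y\<bar> = \<bar>\<Sum>k\<le>n. q k * (x ^ k - y ^ k)\<bar>"
    by (simp add: ev_def sum_subtractf algebra_simps)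
  also have "\<dots> \<le> (\<Sum>k\<le>n. \<bar>q k\<bar> * (real n * B ^ n * \<bar>x - y\<bar>))"
  proof (rule order.trans[OF sum_abs], rule sum_mono)
    fix k assume k: "k \<in> {..n}"
    have "\<bar>x ^ k - y ^ k\<bar> \<le> real k * B ^ k * \<bar>x - y\<bar>" by (rule pow_diff_bound[OF assms])
    also have "\<dots> \<le> real n * B ^ n * \<bar>x - y\<bar>"
      using k assms by (intro mult_right_mono mult_mono power_increasing) auto
    finally show "\<bar>q k * (x ^ k - y ^ k)\<bar> \<le> \<bar>q k\<bar> * (real n * B ^ n * \<bar>x - y\<bar>)"
      by (simp add: abs_mult mult_left_mono)
  qed
  also have "\<dots> = real n * B ^ n * N1 n q * \<bar>x - y\<bar>"
    by (simp add: N1_def sum_distrib_right sum_distrib_left algebra_simps)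
  finally show ?thesis .
qed


definition mom :: "real set \<Rightarrow> (real \<Rightarrow> real) \<Rightarrow> nat \<Rightarrow> real" where
  "mom G w k = (\<Sum>t\<in>G. w t * t ^ k)"

definition FF :: "nat \<Rightarrow> (nat \<Rightarrow> real) \<Rightarrow> real set \<Rightarrow> (real \<Rightarrow> real) \<Rightarrow> real" where
  "FF n z G w = (\<Sum>k\<le>n. (mom G w k - z k)\<^sup>2)"

lemma grid_min:
  fixes G :: "real set" and z :: "nat \<Rightarrow> real"
  assumes G: "finite G"
  shows "\<exists>w. (\<forall>t\<in>G. w t \<ge> 0) \<and>
     (\<forall>t\<in>G. ev n (\<lambda>k. mom G w k - z k) t \<ge> 0) \<and>
     (\<Sum>k\<le>n. (mom G w k - z k) * mom G w k) \<le> 0"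
proof -
  define Z where "Z = (\<Sum>k\<le>n. (z k)\<^sup>2)"
  define W where "W = \<bar>z 0\<bar> + Z + 2"
  define X where "X = product_topology (\<lambda>_::real. euclideanreal) G"
  define Bx where "Bx = PiE G (\<lambda>_::real. {0..W})"
  have Z0: "Z \<ge> 0" unfolding Z_def by (simp add: sum_nonneg)
  have W0: "W \<ge> 0" unfolding W_def using Z0 by simp
  have cB: "compactin X Bx" unfolding X_def Bx_def by (rule compactin_box)
  have zero_in: "restrict (\<lambda>_. 0) G \<in> Bx" unfolding Bx_def using W0 by auto
  have contF: "continuous_map X euclideanreal (FF n z G)"
    unfolding X_def FF_def mom_def
    by (intro continuous_intros continuous_map_product_projection) (auto simp: G)
  obtain w where w: "w \<in> Bx" "\<forall>v\<in>Bx. FF n z G w \<le> FF n z G v"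
    using cm_attains_min[OF cB _ contF] zero_in by blast
  have wnn: "\<forall>t\<in>G. w t \<ge> 0" "\<forall>t\<in>G. w t \<le> W" using w(1) by (auto simp: Bx_def)
  define p where "p = mom G w"
  define q where "q = (\<lambda>k. p k - z k)"
  have Fq: "FF n z G w = (\<Sum>k\<le>n. (q k)\<^sup>2)" by (simp add: FF_def q_def p_def)
  have "FF n z G w \<le> FF n z G (restrict (\<lambda>_. 0) G)" using w zero_in by blast
  also have "\<dots> = Z" by (simp add: FF_def mom_def Z_def)
  finally have FZ: "FF n z G w \<le> Z" .
  have "(q 0)\<^sup>2 \<le> (\<Sum>k\<le>n. (q k)\<^sup>2)" by (rule member_le_sum) auto
  then have q0: "(p 0 - z 0)\<^sup>2 \<le> Z" using FZ Fq q_def by simp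
  have p0: "p 0 = (\<Sum>t\<in>G. w t)" by (simp add: p_def mom_def)
  have "p 0 \<le> \<bar>z 0\<bar> + Z + 1"
  proof (rule ccontr)
    assume "\<not> ?thesis"
    then have "p 0 - z 0 > Z + 1" "Z + 1 \<ge> 1" using Z0 by auto
    then have "(p 0 - z 0)\<^sup>2 > Z"
      by (smt (verit, best) power2_eq_square mult_le_cancel_left1)
    then show False using q0 by simp
  qed
  moreover have "w t \<le> p 0" if "t \<in> G" for t
    unfolding p0 using wnn(1) G that by (intro member_le_sum) auto
  ultimately have wlt: "\<forall>t\<in>G. w t < W"
    unfolding W_def by force
  \<comment> \<open>first variation in direction of a point\<close>
  have evpos: "ev n q t \<ge> 0" if t: "t \<in> G" for t
  proof (rule ccontr)
    assume neg: "\<not> ev n q t \<ge> 0"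
    define V where "V = (\<Sum>k\<le>n. (t ^ k)\<^sup>2)"
    have "(t ^ 0)\<^sup>2 \<le> V" unfolding V_def by (rule member_le_sum) auto
    then have V1: "V \<ge> 1" by simp
    define \<epsilon> where "\<epsilon> = min (W - w t) (- ev n q t / V)"
    have e0: "\<epsilon> > 0" using wlt t neg V1 by (auto simp: \<epsilon>_def divide_neg_pos)
    have eV: "\<epsilon> * V \<le> - ev n q t" using V1 by (auto simp: \<epsilon>_def field_simps min_def)
    define w' where "w' = restrict (\<lambda>t'. w t' + (if t' = t then \<epsilon> else 0)) G"
    have "w' \<in> Bx" using wnn e0 unfolding Bx_def w'_def \<epsilon>_def by auto
    then have le: "FF n z G w \<le> FF n z G w'" using w by blast
    have mw': "mom G w' k = p k + \<epsilon> * t ^ k" for k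
    proof -
      have "mom G w' k = (\<Sum>t'\<in>G. w t' * t' ^ k + (if t' = t then \<epsilon> * t ^ k else 0))"
        unfolding mom_def w'_def by (intro sum.cong) (auto simp: algebra_simps)
      also have "\<dots> = p k + \<epsilon> * t ^ k"
        using G t by (simp add: sum.distrib p_def mom_def)
      finally show ?thesis .
    qed
    have "FF n z G w' = (\<Sum>k\<le>n. (q k)\<^sup>2 + 2 * \<epsilon> * (q k * t ^ k) + \<epsilon>\<^sup>2 * (t ^ k)\<^sup>2)"
      by (simp add: FF_def mw' q_def power2_eq_square algebra_simps)
    also have "\<dots> = FF n z G w + 2 * \<epsilon> * ev n q t + \<epsilon>\<^sup>2 * V"
      by (simp add: Fq sum.distrib ev_def V_def sum_distrib_left)
    finally have "FF n z G w' = FF n z G w + 2 * \<epsilon> * ev n q t + \<epsilon> * (\<epsilon> * V)"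
      by (simp add: power2_eq_square)
    moreover have "\<epsilon> * (\<epsilon> * V) \<le> - (\<epsilon> * ev n q t)" using mult_left_mono[OF eV, of \<epsilon>] e0 by simp
    moreover have "\<epsilon> * ev n q t < 0" using e0 neg by (simp add: mult_pos_neg)
    ultimately have "FF n z G w' < FF n z G w" by linarith
    then show False using le by simp
  qed
  \<comment> \<open>variation by scaling\<close>
  have qp: "(\<Sum>k\<le>n. q k * p k) \<le> 0"
  proof (rule ccontr)
    assume pos: "\<not> ?thesis"
    define I where "I = (\<Sum>k\<le>n. q k * p k)"
    define P2 where "P2 = (\<Sum>k\<le>n. (p k)\<^sup>2)"
    have I0: "I > 0" using pos I_def by simp
    have P20: "P2 > 0"
    proof (rule ccontr)
      assume "\<not> P2 > 0"
      then have "P2 = 0" using sum_nonneg[of "{..n}" "\<lambda>k. (p k)\<^sup>2"] P2_def by simp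
      then have "\<forall>k\<in>{..n}. (p k)\<^sup>2 = 0" unfolding P2_def
        by (subst sum_nonneg_eq_0_iff[symmetric]) auto
      then have "I = 0" unfolding I_def by simp
      then show False using I0 by simp
    qed
    define \<epsilon> where "\<epsilon> = min 1 (I / P2)"
    have e0: "\<epsilon> > 0" "\<epsilon> \<le> 1" using I0 P20 by (auto simp: \<epsilon>_def)
    have eP: "\<epsilon> * P2 \<le> I" using P20 by (auto simp: \<epsilon>_def field_simps min_def)
    define w' where "w' = restrict (\<lambda>t'. (1 - \<epsilon>) * w t') G"
    have "w' \<in> Bx" using wnn e0 unfolding Bx_def w'_def
      by (auto intro!: mult_nonneg_nonneg order.trans[OF mult_left_le_one_le])
    then have le: "FF n z G w \<le> FF n z G w'" using w by blast
    have mw': "mom G w' k = p k - \<epsilon> * p k" for k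
      by (simp add: mom_def w'_def p_def algebra_simps sum_subtractf sum_distrib_left)
    have "FF n z G w' = (\<Sum>k\<le>n. (q k)\<^sup>2 - 2 * \<epsilon> * (q k * p k) + \<epsilon>\<^sup>2 * (p k)\<^sup>2)"
      by (simp add: FF_def mw' q_def power2_eq_square algebra_simps)
    also have "\<dots> = FF n z G w - 2 * \<epsilon> * I + \<epsilon>\<^sup>2 * P2"
      by (simp add: Fq sum.distrib sum_subtractf I_def P2_def sum_distrib_left)
    finally have "FF n z G w' = FF n z G w - 2 * \<epsilon> * I + \<epsilon> * (\<epsilon> * P2)"
      by (simp add: power2_eq_square)
    moreover have "\<epsilon> * (\<epsilon> * P2) \<le> \<epsilon> * I" using mult_left_mono[OF eP, of \<epsilon>] e0 by simp
    moreover have "\<epsilon> * I > 0" using e0 I0 by simp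
    ultimately have "FF n z G w' < FF n z G w" by linarith
    then show False using le by simp
  qed
  show ?thesis
    using wnn(1) evpos qp unfolding q_def p_def by blast
qed


lemma sum_bump:
  fixes q f :: "nat \<Rightarrow> real"
  shows "(\<Sum>k\<le>n. (q k + (if k = 0 then c else 0)) * f k) = (\<Sum>k\<le>n. q k * f k) + c * f 0"
proof -
  have "(\<Sum>k\<le>n. (q k + (if k = 0 then c else 0)) * f k) = (\<Sum>k\<le>n. q k * f k + (if k = 0 then c * f 0 else 0))"
    by (intro sum.cong) (auto simp: algebra_simps)
  also have "\<dots> = (\<Sum>k\<le>n. q k * f k) + c * f 0" by (simp add: sum.distrib)
  finally show ?thesis .
qed

lemma grid_rep:
  assumes a: "0 < a" "a < b" "\<delta> > 0"
    and marg: "\<forall>q. (\<forall>x\<in>{a..b}. ev n q x \<ge> 0) \<longrightarrow> LL n z q \<ge> \<delta> * N1 n q"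
  shows "\<exists>G \<omega>. finite G \<and> G \<subseteq> {a..b} \<and> (\<forall>t\<in>G. \<omega> t \<ge> 0) \<and> (\<forall>k\<le>n. z k = mom G \<omega> k)"
proof -
  define B where "B = max 1 b"
  define D where "D = real n * B ^ n"
  define E where "E = D * (\<delta> + \<bar>z 0\<bar>)"
  have B1: "B \<ge> 1" and bB: "b \<le> B" by (auto simp: B_def)
  have D0: "D \<ge> 0" using B1 by (simp add: D_def)
  have E0: "E \<ge> 0" using D0 a by (simp add: E_def)
  define m where "m = nat \<lceil>(b - a) * E / \<delta>\<rceil> + 1"
  have m1: "m \<ge> 1" by (simp add: m_def)
  have mge: "real m \<ge> (b - a) * E / \<delta>" unfolding m_def
    by (smt (verit, best) of_nat_1 of_nat_add real_nat_ceiling_ge)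
  define h where "h = (b - a) / real m"
  have h0: "h > 0" using a m1 by (simp add: h_def)
  have hE: "h * E \<le> \<delta>"
  proof -
    have "(b - a) * E \<le> \<delta> * real m" using mge a by (simp add: field_simps)
    then show ?thesis using m1 by (simp add: h_def field_simps)
  qed
  have mh: "real m * h = b - a" using m1 by (simp add: h_def)
  define G where "G = (\<lambda>i. a + real i * h) ` {..m}"
  have finG: "finite G" by (simp add: G_def)
  have Gab: "G \<subseteq> {a..b}"
  proof
    fix t assume "t \<in> G"
    then obtain i where i: "i \<le> m" "t = a + real i * h" by (auto simp: G_def)
    have "real i * h \<le> real m * h" using i h0 by (intro mult_right_mono) auto
    then show "t \<in> {a..b}" using i h0 mh by auto
  qed
  have near: "\<exists>t\<in>G. \<bar>x - t\<bar> \<le> h" if x: "x \<in> {a..b}" for x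
  proof -
    define i where "i = nat \<lfloor>(x - a) / h\<rfloor>"
    have f0: "(x - a) / h \<ge> 0" using x h0 by auto
    have "real i \<le> (x - a) / h" unfolding i_def using f0 by linarith
    then have le: "real i * h \<le> x - a" using h0 by (simp add: field_simps)
    have "(x - a) / h < real i + 1" unfolding i_def using f0 by linarith
    then have gt: "x - a < real i * h + h" using h0 by (simp add: field_simps)
    have "(x - a) / h \<le> real m" using x h0 mh by (simp add: field_simps)
    then have im: "i \<le> m" unfolding i_def by (simp add: nat_le_iff floor_le_iff)
    show ?thesis
      using le gt im by (intro bexI[of _ "a + real i * h"]) (auto simp: G_def)
  qed
  obtain w where w: "\<forall>t\<in>G. w t \<ge> 0" "\<forall>t\<in>G. ev n (\<lambda>k. mom G w k - z k) t \<ge> 0"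
     "(\<Sum>k\<le>n. (mom G w k - z k) * mom G w k) \<le> 0"
    using grid_min[OF finG, of n z] by blast
  define p where "p = mom G w"
  define q where "q = (\<lambda>k. p k - z k)"
  have evG: "\<forall>t\<in>G. ev n q t \<ge> 0" using w(2) by (simp add: q_def p_def)
  define c where "c = h * D * N1 n q"
  have c0: "c \<ge> 0" using h0 D0 N1_nonneg[of n q] by (simp add: c_def)
  have low: "ev n q x \<ge> - c" if x: "x \<in> {a..b}" for x
  proof -
    obtain t where t: "t \<in> G" "\<bar>x - t\<bar> \<le> h" using near[OF x] by blast
    have tab: "t \<in> {a..b}" using t Gab by auto
    have "\<bar>ev n q x - ev n q t\<bar> \<le> D * N1 n q * \<bar>x - t\<bar>"
      unfolding D_def using x tab a B1 bB by (intro ev_lip) auto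
    also have "\<dots> \<le> D * N1 n q * h"
      using t D0 N1_nonneg[of n q] by (intro mult_left_mono) auto
    finally have "\<bar>ev n q x - ev n q t\<bar> \<le> c" by (simp add: c_def algebra_simps)
    moreover have "ev n q t \<ge> 0" using evG t by blast
    ultimately show ?thesis by linarith
  qed
  define r where "r = (\<lambda>k. q k + (if k = 0 then c else 0))"
  have evr: "ev n r x = ev n q x + c" for x
    unfolding ev_def r_def by (subst sum_bump) simp
  have LLr: "LL n z r = LL n z q + c * z 0"
    unfolding LL_def r_def by (subst sum_bump) simp
  have N1r: "N1 n r \<ge> N1 n q - c"
  proof -
    have "N1 n q \<le> (\<Sum>k\<le>n. \<bar>r k\<bar> + (if k = 0 then c else 0))"
      unfolding N1_def r_def using c0 by (intro sum_mono) auto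
    also have "\<dots> = N1 n r + c" by (simp add: N1_def sum.distrib)
    finally show ?thesis by simp
  qed
  have "\<forall>x\<in>{a..b}. ev n r x \<ge> 0" unfolding evr using low by fastforce
  then have "LL n z r \<ge> \<delta> * N1 n r" using marg by blast
  moreover have "\<delta> * N1 n r \<ge> \<delta> * (N1 n q - c)" using N1r a by (intro mult_left_mono) auto
  moreover have "c * z 0 \<le> c * \<bar>z 0\<bar>" using c0 by (intro mult_left_mono) auto
  ultimately have "LL n z q \<ge> \<delta> * N1 n q - c * (\<delta> + \<bar>z 0\<bar>)"
    using LLr by (simp add: algebra_simps)
  moreover have "c * (\<delta> + \<bar>z 0\<bar>) = N1 n q * (h * E)" by (simp add: c_def E_def algebra_simps)
  moreover have "N1 n q * (h * E) \<le> N1 n q * \<delta>" using hE N1_nonneg[of n q] by (intro mult_left_mono) auto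
  ultimately have LLq0: "LL n z q \<ge> 0" by (simp add: mult.commute)
  have "LL n z q = (\<Sum>k\<le>n. q k * p k) - (\<Sum>k\<le>n. (q k)\<^sup>2)"
    by (simp add: LL_def q_def power2_eq_square algebra_simps sum_subtractf[symmetric])
  moreover have "(\<Sum>k\<le>n. q k * p k) \<le> 0" using w(3) by (simp add: q_def p_def)
  ultimately have "(\<Sum>k\<le>n. (q k)\<^sup>2) \<le> 0" using LLq0 by linarith
  then have "(\<Sum>k\<le>n. (q k)\<^sup>2) = 0" using sum_nonneg[of "{..n}" "\<lambda>k. (q k)\<^sup>2"] by simp
  then have "\<forall>k\<in>{..n}. (q k)\<^sup>2 = 0" by (subst sum_nonneg_eq_0_iff[symmetric]) auto
  then have "\<forall>k\<le>n. z k = mom G w k" by (simp add: q_def p_def)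
  then show ?thesis using finG Gab w(1) by blast
qed


theorem lemma5p2:
  fixes n :: nat and s :: "nat \<Rightarrow> real"
  assumes "\<forall>k\<le>n. s k \<ge> 0"
    and "strictly_positive_pos n s"
  shows "T_inf n s = \<infinity>"
proof (rule ereal_top)
  fix M :: real
  obtain a b where ab: "0 < a" "a < b" and spo: "strictly_positive_on n s a b"
    using assms(2) by (auto simp: strictly_positive_pos_def)
  obtain \<delta> where \<delta>: "\<delta> > 0" "\<forall>q. (\<forall>x\<in>{a..b}. ev n q x \<ge> 0) \<longrightarrow> LL n s q \<ge> \<delta> * N1 n q"
    using margin[OF spo] by blast
  define w0 where "w0 = \<delta> / 2"
  define c where "c = min (a / 2) (min 1 (w0 / (\<bar>M\<bar> + 1)))"
  have w00: "w0 > 0" using \<delta> by (simp add: w0_def)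
  have c0: "c > 0" "c < a" "c \<le> 1" using ab w00 by (auto simp: c_def)
  have cM: "w0 / c \<ge> \<bar>M\<bar> + 1"
  proof -
    have "c \<le> w0 / (\<bar>M\<bar> + 1)" by (simp add: c_def)
    then have "c * (\<bar>M\<bar> + 1) \<le> w0" by (simp add: field_simps)
    then show ?thesis using c0 by (simp add: field_simps)
  qed
  define z where "z = (\<lambda>k. s k - w0 * c ^ k)"
  have margz: "\<forall>q. (\<forall>x\<in>{a..b}. ev n q x \<ge> 0) \<longrightarrow> LL n z q \<ge> (\<delta> / 2) * N1 n q"
  proof (intro allI impI)
    fix q assume q: "\<forall>x\<in>{a..b}. ev n q x \<ge> 0"
    have LLz: "LL n z q = LL n s q - w0 * ev n q c"
      by (simp add: LL_def ev_def z_def algebra_simps sum_subtractf sum_distrib_left)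
    have "\<bar>ev n q c\<bar> \<le> N1 n q"
      unfolding ev_def N1_def
    proof (rule order.trans[OF sum_abs], rule sum_mono)
      fix k assume "k \<in> {..n}"
      have "c ^ k \<le> 1" using c0 by (simp add: power_le_one)
      then show "\<bar>q k * c ^ k\<bar> \<le> \<bar>q k\<bar>" using c0
        by (simp add: abs_mult mult_left_le)
    qed
    then have "w0 * ev n q c \<le> w0 * N1 n q" using w00 by (simp add: abs_le_iff)
    moreover have "LL n s q \<ge> \<delta> * N1 n q" using \<delta>(2) q by blast
    ultimately show "LL n z q \<ge> (\<delta> / 2) * N1 n q" using LLz unfolding w0_def by linarith
  qed
  obtain G \<omega> where G: "finite G" "G \<subseteq> {a..b}" "\<forall>t\<in>G. \<omega> t \<ge> 0" "\<forall>k\<le>n. z k = mom G \<omega> k"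
    using grid_rep[OF ab(1,2) _ margz] \<delta> by auto
  have cG: "c \<notin> G" using G(2) c0 by auto
  define F where "F = insert c G"
  define \<omega>' where "\<omega>' = (\<lambda>t. if t = c then w0 else \<omega> t)"
  have sumF: "(\<Sum>t\<in>F. \<omega>' t * f t) = w0 * f c + (\<Sum>t\<in>G. \<omega> t * f t)" for f :: "real \<Rightarrow> real"
  proof -
    have "(\<Sum>t\<in>F. \<omega>' t * f t) = \<omega>' c * f c + (\<Sum>t\<in>G. \<omega>' t * f t)"
      unfolding F_def using G(1) cG by simp
    also have "(\<Sum>t\<in>G. \<omega>' t * f t) = (\<Sum>t\<in>G. \<omega> t * f t)"
      using cG by (intro sum.cong) (auto simp: \<omega>'_def)
    finally show ?thesis by (simp add: \<omega>'_def)
  qed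
  have Fsub: "F \<subseteq> {c..b}" using G(2) c0 ab by (auto simp: F_def)
  have wF: "\<And>t. t \<in> F \<Longrightarrow> \<omega>' t \<ge> 0" using G(3) w00 by (auto simp: F_def \<omega>'_def)
  obtain \<mu> where \<mu>: "sets \<mu> = sets (restrict_space borel {c..b})"
    "\<forall>f::real\<Rightarrow>real. f \<in> borel_measurable borel \<longrightarrow>
       integrable \<mu> f \<and> integral\<^sup>L \<mu> f = (\<Sum>t\<in>F. \<omega>' t * f t)"
    using discrete_measure[of F c b \<omega>'] G(1) Fsub wF by (auto simp: F_def)
  have mm: "\<mu> \<in> moment_measures n s c b"
    unfolding moment_measures_def
  proof (intro CollectI conjI allI impI)
    show "sets \<mu> = sets (restrict_space borel {c..b})" by fact
    fix k assume k: "k \<le> n"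
    have meas: "(\<lambda>t::real. t ^ k) \<in> borel_measurable borel" by measurable
    show "integrable \<mu> (\<lambda>t. t ^ k)" using \<mu>(2) meas by blast
    have "(\<integral>t. t ^ k \<partial>\<mu>) = w0 * c ^ k + mom G \<omega> k"
      using \<mu>(2) meas sumF by (simp add: mom_def)
    also have "\<dots> = s k" using G(4) k unfolding z_def by (metis add_diff_cancel_left' diff_add_cancel add.commute)
    finally show "(\<integral>t. t ^ k \<partial>\<mu>) = s k" .
  qed
  have meas1: "(\<lambda>t::real. 1 / t) \<in> borel_measurable borel" by measurable
  have "(\<integral>t. 1 / t \<partial>\<mu>) = w0 * (1 / c) + (\<Sum>t\<in>G. \<omega> t * (1 / t))"
    using \<mu>(2) meas1 sumF by simp
  also have "\<dots> \<ge> w0 / c"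
  proof -
    have "(\<Sum>t\<in>G. \<omega> t * (1 / t)) \<ge> 0"
      using G(2,3) ab by (intro sum_nonneg) auto
    then show ?thesis by simp
  qed
  finally have int: "(\<integral>t. 1 / t \<partial>\<mu>) \<ge> M" using cM by linarith
  have "ereal M \<le> ereal (\<integral>t. 1 / t \<partial>\<mu>)" using int by simp
  also have "\<dots> \<le> T_ab n s c b" unfolding T_ab_def by (rule SUP_upper[OF mm])
  also have "\<dots> \<le> T_inf n s" unfolding T_inf_def
    using c0 ab by (intro SUP_upper2[of "(c, b)"]) auto
  finally show "ereal M \<le> T_inf n s" .
qed

end
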